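(* Let $\mathcal{C}$ be a permutation class. If there exists a partial multiplication matrix $M$ whose row-column graph is a cycle such that $\mathcal{C}$ contains $M$-coils of arbitrarily large length, then $\mathcal{C}$ is not labelled well quasi-ordered.
   Context: Permutations are identified with their plots; $\sigma\le\pi$ if $\pi$ has a subsequence order-isomorphic to $\sigma$; a permutation class is a containment-closed set. A gridding matrix has entries in $\{0,1,-1\}$; an $m\times n$ one has $m$ columns, $n$ rows, $M_{ij}$ in column $i$ from the left and row $j$ from the bottom. An $M$-gridding of a permutation $\pi$ of length $L$ is a choice of vertical lines $\tfrac12=v_0\le\dots\le v_m=L+\tfrac12$ and horizontal lines $\tfrac12=h_0\le\dots\le h_n=L+\tfrac12$, not through points of $\pi$, such that in each cell $C_{ij}=\{v_{i-1}<x<v_i,\ h_{j-1}<y<h_j\}$ the points of $\pi$ are absent if $M_{ij}=0$, increasing if $M_{ij}=1$, decreasing if $M_{ij}=-1$; this gives an $M$-gridded permutation $\pi^\#$. The row-column graph $G_M$ is the bipartite graph on $\{1,\dots,m\}\cup\{1',\dots,n'\}$ with edge $ij'$ iff $M_{ij}\neq 0$. $M$ is a partial multiplication matrix if there are fixed $c_1,\dots,c_m,r_1,\dots,r_n\in\{\pm1\}$ with $M_{ij}=c_ir_j$ for each non-zero entry. Column $i$ is oriented left-to-right if $c_i=1$, right-to-left otherwise; row $j$ bottom-to-top if $r_j=1$, top-to-bottom otherwise. The orientation digraph $D_{\pi^\#}$ has the points of $\pi^\#$ as vertices, with $x\to y$ whenever $x,y$ lie in a common column of cells and $x$ precedes $y$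 in that column's orientation, or lie in a common row of cells and $x$ precedes $y$ in that row's orientation. Let $\ell$ be the length of the cycle $G_M$. A gridded $M$-coil is an $M$-gridded permutation of length $n>\ell$ with an ordering $v_1,\dots,v_n$ of its points and a labelling of the $\ell$ non-zero cells by $1,\dots,\ell$ such that (C1) $v_i$ lies in cell $i\bmod\ell$ (residues in $\{1,\dots,\ell\}$); (C2) $v_{i-1}\to v_i$ for $1<i\le n$; (C3) $v_i\to v_{i-\ell-1}$ for $\ell+1<i\le n$; (C4) $v_{\ell+1}\to v_1$. An $M$-coil is a permutation having an $M$-gridding which is a gridded $M$-coil; its length is its number of points. A quasi-order is wqo if every infinite sequence has $x_i\le x_j$ for some $i<j$. For a quasi-order $L$, an $L$-labelled permutation is a permutation with a map from its points to $L$; $(\sigma,\ell_\sigma)\le(\pi,\ell_\pi)$ if some embedding of $\sigma$ in $\pi$ maps each point to one whose label is $\ge$ its own. A set of permutations is labelled well quasi-ordered if its set of $L$-labelled elements is wqo for every wqo $L$. *)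

theory Defs
  imports Main
begin

text \<open>A permutation of length L is a list of the values 0..L-1 without repetition.
  Point k (0-based position) has coordinates (k+1, pi!k+1).\<close>
definition is_perm :: "nat list \<Rightarrow> bool" where
  "is_perm p \<longleftrightarrow> distinct p \<and> set p = {0..<length p}"

definition embedding :: "nat list \<Rightarrow> nat list \<Rightarrow> (nat \<Rightarrow> nat) \<Rightarrow> bool" where
  "embedding s p f \<longleftrightarrow>
     (\<forall>i j. i < j \<and> j < length s \<longrightarrow> f i < f j) \<and>
     (\<forall>i < length s. f i < length p) \<and>
     (\<forall>i < length s. \<forall>j < length s. s!i < s!j \<longleftrightarrow> p!(f i) < p!(f j))"

definition contained :: "nat list \<Rightarrow> nat list \<Rightarrow> bool" where
  "contained s p \<longleftrightarrow> (\<exists>f. embedding s p f)"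

definition perm_class :: "nat list set \<Rightarrow> bool" where
  "perm_class C \<longleftrightarrow> (\<forall>p\<in>C. is_perm p) \<and>
     (\<forall>p\<in>C. \<forall>s. is_perm s \<and> contained s p \<longrightarrow> s \<in> C)"

definition quasi_order_on_nat :: "(nat \<Rightarrow> nat \<Rightarrow> bool) \<Rightarrow> bool" where
  "quasi_order_on_nat le \<longleftrightarrow> (\<forall>x. le x x) \<and> (\<forall>x y z. le x y \<longrightarrow> le y z \<longrightarrow> le x z)"

definition good_on :: "'a set \<Rightarrow> ('a \<Rightarrow> 'a \<Rightarrow> bool) \<Rightarrow> bool" where
  "good_on A R \<longleftrightarrow> (\<forall>f :: nat \<Rightarrow> 'a. (\<forall>i. f i \<in> A) \<longrightarrow> (\<exists>i j. i < j \<and> R (f i) (f j)))"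

definition wqo_nat :: "(nat \<Rightarrow> nat \<Rightarrow> bool) \<Rightarrow> bool" where
  "wqo_nat le \<longleftrightarrow> quasi_order_on_nat le \<and> good_on UNIV le"

text \<open>Labelled permutations: a permutation together with a labelling of its points
  (positions 0..length-1; values of the labelling outside this range are irrelevant).\<close>
definition labelled_le :: "(nat \<Rightarrow> nat \<Rightarrow> bool) \<Rightarrow> (nat list \<times> (nat \<Rightarrow> nat)) \<Rightarrow> (nat list \<times> (nat \<Rightarrow> nat)) \<Rightarrow> bool" where
  "labelled_le le sa pb \<longleftrightarrow>
     (\<exists>f. embedding (fst sa) (fst pb) f \<and> (\<forall>i < length (fst sa). le (snd sa i) (snd pb (f i))))"

definition labelled_elems :: "nat list set \<Rightarrow> (nat list \<times> (nat \<Rightarrow> nat)) set" where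
  "labelled_elems C = {(p, a). p \<in> C}"

text \<open>Labelled wqo. Labels are drawn from wqos on nat: any bad sequence uses only countably
  many labels, so this is equivalent to quantifying over all wqos.\<close>
definition labelled_wqo :: "nat list set \<Rightarrow> bool" where
  "labelled_wqo C \<longleftrightarrow> (\<forall>le. wqo_nat le \<longrightarrow> good_on (labelled_elems C) (labelled_le le))"

text \<open>Matrix M with m columns (i = 1..m) and n rows (j = 1..n); column signs c, row signs r.\<close>
definition partial_mult_matrix ::
  "nat \<Rightarrow> nat \<Rightarrow> (nat \<Rightarrow> nat \<Rightarrow> int) \<Rightarrow> (nat \<Rightarrow> int) \<Rightarrow> (nat \<Rightarrow> int) \<Rightarrow> bool" where
  "partial_mult_matrix m n M c r \<longleftrightarrow>
     (\<forall>i\<in>{1..m}. \<forall>j\<in>{1..n}. M i j \<in> {-1, 0, 1}) \<and>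
     (\<forall>i\<in>{1..m}. c i \<in> {-1, 1}) \<and> (\<forall>j\<in>{1..n}. r j \<in> {-1, 1}) \<and>
     (\<forall>i\<in>{1..m}. \<forall>j\<in>{1..n}. M i j \<noteq> 0 \<longrightarrow> M i j = c i * r j)"

text \<open>Row-column graph: vertices Inl i (columns) and Inr j (rows).\<close>
definition rc_vertices :: "nat \<Rightarrow> nat \<Rightarrow> (nat + nat) set" where
  "rc_vertices m n = Inl ` {1..m} \<union> Inr ` {1..n}"

definition rc_edge :: "nat \<Rightarrow> nat \<Rightarrow> (nat \<Rightarrow> nat \<Rightarrow> int) \<Rightarrow> nat + nat \<Rightarrow> nat + nat \<Rightarrow> bool" where
  "rc_edge m n M x y \<longleftrightarrow>
     (\<exists>i\<in>{1..m}. \<exists>j\<in>{1..n}. M i j \<noteq> 0 \<and> ((x = Inl i \<and> y = Inr j) \<or> (x = Inr j \<and> y = Inl i)))"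

definition is_cycle_graph :: "'v set \<Rightarrow> ('v \<Rightarrow> 'v \<Rightarrow> bool) \<Rightarrow> bool" where
  "is_cycle_graph V E \<longleftrightarrow>
     (\<exists>w (k::nat). 3 \<le> k \<and> bij_betw w {0..<k} V \<and>
        (\<forall>x y. E x y \<longleftrightarrow> (\<exists>i<k. (x = w i \<and> y = w ((i+1) mod k)) \<or> (y = w i \<and> x = w ((i+1) mod k)))))"

definition rc_graph_is_cycle :: "nat \<Rightarrow> nat \<Rightarrow> (nat \<Rightarrow> nat \<Rightarrow> int) \<Rightarrow> bool" where
  "rc_graph_is_cycle m n M \<longleftrightarrow> is_cycle_graph (rc_vertices m n) (rc_edge m n M)"

definition nonzero_cells :: "nat \<Rightarrow> nat \<Rightarrow> (nat \<Rightarrow> nat \<Rightarrow> int) \<Rightarrow> (nat \<times> nat) set" where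
  "nonzero_cells m n M = {(i, j). i \<in> {1..m} \<and> j \<in> {1..n} \<and> M i j \<noteq> 0}"

text \<open>Vertical lines: v 0 = 0 <= v 1 <= ... <= v m = L, the line v i standing for x = v i + 1/2.
  Position k (0-based) lies in column i iff v (i-1) <= k < v i; similarly rows with h and values.\<close>
definition in_col :: "(nat \<Rightarrow> nat) \<Rightarrow> nat \<Rightarrow> nat \<Rightarrow> bool" where
  "in_col v i k \<longleftrightarrow> v (i - 1) \<le> k \<and> k < v i"

definition in_row :: "nat list \<Rightarrow> (nat \<Rightarrow> nat) \<Rightarrow> nat \<Rightarrow> nat \<Rightarrow> bool" where
  "in_row p h j k \<longleftrightarrow> h (j - 1) \<le> p!k \<and> p!k < h j"

definition in_cell :: "nat list \<Rightarrow> (nat \<Rightarrow> nat) \<Rightarrow> (nat \<Rightarrow> nat) \<Rightarrow> nat \<times> nat \<Rightarrow> nat \<Rightarrow> bool" where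
  "in_cell p v h ij k \<longleftrightarrow> in_col v (fst ij) k \<and> in_row p h (snd ij) k"

definition is_gridding ::
  "nat \<Rightarrow> nat \<Rightarrow> (nat \<Rightarrow> nat \<Rightarrow> int) \<Rightarrow> nat list \<Rightarrow> (nat \<Rightarrow> nat) \<Rightarrow> (nat \<Rightarrow> nat) \<Rightarrow> bool" where
  "is_gridding m n M p v h \<longleftrightarrow>
     v 0 = 0 \<and> v m = length p \<and> (\<forall>i<m. v i \<le> v (Suc i)) \<and>
     h 0 = 0 \<and> h n = length p \<and> (\<forall>j<n. h j \<le> h (Suc j)) \<and>
     (\<forall>i\<in>{1..m}. \<forall>j\<in>{1..n}. \<forall>k<length p. \<forall>k'<length p.
        in_cell p v h (i, j) k \<and> in_cell p v h (i, j) k' \<longrightarrow>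
          (M i j = 0 \<longrightarrow> False) \<and>
          (M i j = 1 \<longrightarrow> (k < k' \<longrightarrow> p!k < p!k')) \<and>
          (M i j = -1 \<longrightarrow> (k < k' \<longrightarrow> p!k > p!k')))"

definition orient_arrow ::
  "nat \<Rightarrow> nat \<Rightarrow> (nat \<Rightarrow> int) \<Rightarrow> (nat \<Rightarrow> int) \<Rightarrow> nat list \<Rightarrow> (nat \<Rightarrow> nat) \<Rightarrow> (nat \<Rightarrow> nat) \<Rightarrow> nat \<Rightarrow> nat \<Rightarrow> bool" where
  "orient_arrow m n c r p v h x y \<longleftrightarrow>
     (\<exists>i\<in>{1..m}. in_col v i x \<and> in_col v i y \<and> (if c i = 1 then x < y else y < x)) \<or>
     (\<exists>j\<in>{1..n}. in_row p h j x \<and> in_row p h j y \<and> (if r j = 1 then p!x < p!y else p!y < p!x))"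

text \<open>Gridded M-coil. Points are ordered by ord : {1..L} -> positions, cells labelled
  by lab : {1..ell} -> nonzero cells; ell is the number of non-zero cells (= cycle length).\<close>
definition is_gridded_coil ::
  "nat \<Rightarrow> nat \<Rightarrow> (nat \<Rightarrow> nat \<Rightarrow> int) \<Rightarrow> (nat \<Rightarrow> int) \<Rightarrow> (nat \<Rightarrow> int) \<Rightarrow>
   nat list \<Rightarrow> (nat \<Rightarrow> nat) \<Rightarrow> (nat \<Rightarrow> nat) \<Rightarrow> bool" where
  "is_gridded_coil m n M c r p v h \<longleftrightarrow>
     (let ell = card (nonzero_cells m n M); L = length p; arr = orient_arrow m n c r p v h in
      is_gridding m n M p v h \<and> L > ell \<and>
      (\<exists>ord lab.
         bij_betw ord {1..L} {0..<L} \<and>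
         bij_betw lab {1..ell} (nonzero_cells m n M) \<and>
         (\<forall>i\<in>{1..L}. in_cell p v h (lab (((i - 1) mod ell) + 1)) (ord i)) \<and>
         (\<forall>i. 1 < i \<and> i \<le> L \<longrightarrow> arr (ord (i - 1)) (ord i)) \<and>
         (\<forall>i. ell + 1 < i \<and> i \<le> L \<longrightarrow> arr (ord i) (ord (i - ell - 1))) \<and>
         arr (ord (ell + 1)) (ord 1)))"

definition is_coil ::
  "nat \<Rightarrow> nat \<Rightarrow> (nat \<Rightarrow> nat \<Rightarrow> int) \<Rightarrow> (nat \<Rightarrow> int) \<Rightarrow> (nat \<Rightarrow> int) \<Rightarrow> nat list \<Rightarrow> bool" where
  "is_coil m n M c r p \<longleftrightarrow> is_perm p \<and> (\<exists>v h. is_gridded_coil m n M c r p v h)"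

end

theory Submission
  imports Defs "HOL-Library.Nat_Bijection"
begin

lemma mono_chain:
  assumes "\<forall>i<m. v i \<le> v (Suc i)" "i \<le> j" "j \<le> m"
  shows "(v i :: nat) \<le> v j"
  using assms(2,3)
proof (induction j)
  case 0 then show ?case by simp
next
  case (Suc j)
  show ?case
  proof (cases "i = Suc j")
    case True then show ?thesis by simp
  next
    case False
    then have "i \<le> j" "j < m" using Suc.prems by auto
    have "v i \<le> v j" using Suc.IH \<open>i \<le> j\<close> \<open>j < m\<close> by simp
    moreover have "v j \<le> v (Suc j)" using assms(1) \<open>j < m\<close> by simp
    ultimately show ?thesis by simp
  qed
qed

lemma col_unique:
  assumes "\<forall>i<m. v i \<le> v (Suc i)" "a \<in> {1..m}" "b \<in> {1..m}" "in_col v a k" "in_col v b k"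
  shows "a = b"
proof (rule ccontr)
  assume "a \<noteq> b"
  then consider "a < b" | "b < a" by linarith
  then show False
  proof cases
    case 1
    then have "v a \<le> v (b - 1)" using mono_chain[OF assms(1), of a "b-1"] assms by auto
    then show False using assms(4,5) unfolding in_col_def by linarith
  next
    case 2
    then have "v b \<le> v (a - 1)" using mono_chain[OF assms(1), of b "a-1"] assms by auto
    then show False using assms(4,5) unfolding in_col_def by linarith
  qed
qed

lemma row_unique:
  assumes "\<forall>j<n. h j \<le> h (Suc j)" "a \<in> {1..n}" "b \<in> {1..n}" "in_row p h a k" "in_row p h b k"
  shows "a = b"
proof (rule ccontr)
  assume "a \<noteq> b"
  then consider "a < b" | "b < a" by linarith
  then show False
  proof cases
    case 1
    then have "h a \<le> h (b - 1)" using mono_chain[OF assms(1), of a "b-1"] assms by auto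
    then show False using assms(4,5) unfolding in_row_def by linarith
  next
    case 2
    then have "h b \<le> h (a - 1)" using mono_chain[OF assms(1), of b "a-1"] assms by auto
    then show False using assms(4,5) unfolding in_row_def by linarith
  qed
qed

lemma transfer_arrow:
  assumes gp: "is_gridding m n M p v h" and gq: "is_gridding m n M q v' h'"
    and e: "embedding p q e" and x: "x < length p" and y: "y < length p"
    and Z: "Z \<in> {1..m} \<times> {1..n}" and Z': "Z' \<in> {1..m} \<times> {1..n}"
    and cx: "in_cell p v h Z x" and cex: "in_cell q v' h' Z (e x)"
    and cy: "in_cell p v h Z' y" and cey: "in_cell q v' h' Z' (e y)"
    and arr: "orient_arrow m n c r p v h x y"
  shows "orient_arrow m n c r q v' h' (e x) (e y)"
proof -
  have vm: "\<forall>i<m. v i \<le> v (Suc i)" and hm: "\<forall>j<n. h j \<le> h (Suc j)"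
    using gp unfolding is_gridding_def by auto
  have em: "\<And>i j. i < j \<Longrightarrow> j < length p \<Longrightarrow> e i < e j"
    and ev: "\<And>i j. i < length p \<Longrightarrow> j < length p \<Longrightarrow> (p!i < p!j) = (q!(e i) < q!(e j))"
    using e unfolding embedding_def by auto
  from arr[unfolded orient_arrow_def] show ?thesis
  proof (elim disjE bexE conjE)
    fix i assume i: "i \<in> {1..m}" and ix: "in_col v i x" and iy: "in_col v i y"
      and o: "if c i = 1 then x < y else y < x"
    have "i = fst Z" using col_unique[OF vm i _ ix] Z cx unfolding in_cell_def by auto
    moreover have "i = fst Z'" using col_unique[OF vm i _ iy] Z' cy unfolding in_cell_def by auto
    ultimately have "in_col v' i (e x)" "in_col v' i (e y)" using cex cey unfolding in_cell_def by auto
    moreover have "if c i = 1 then e x < e y else e y < e x" using o em x y by (auto split: if_splits)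
    ultimately show ?thesis using i unfolding orient_arrow_def by blast
  next
    fix j assume j: "j \<in> {1..n}" and jx: "in_row p h j x" and jy: "in_row p h j y"
      and o: "if r j = 1 then p!x < p!y else p!y < p!x"
    have "j = snd Z" using row_unique[OF hm j _ jx] Z cx unfolding in_cell_def by auto
    moreover have "j = snd Z'" using row_unique[OF hm j _ jy] Z' cy unfolding in_cell_def by auto
    ultimately have "in_row q h' j (e x)" "in_row q h' j (e y)" using cex cey unfolding in_cell_def by auto
    moreover have "if r j = 1 then q!(e x) < q!(e y) else q!(e y) < q!(e x)" using o ev x y by (auto split: if_splits)
    ultimately show ?thesis using j unfolding orient_arrow_def by blast
  qed
qed

definition kappa :: "nat list \<Rightarrow> (nat \<Rightarrow> int) \<Rightarrow> (nat \<Rightarrow> int) \<Rightarrow> nat \<times> nat \<Rightarrow> nat \<times> nat \<Rightarrow> nat \<Rightarrow> int" where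
  "kappa q c r X Y z = (if fst X = fst Y then (if c (fst X) = 1 then int z else - int z)
      else (if r (snd X) = 1 then int (q!z) else - int (q!z)))"

lemma cross:
  assumes g: "is_gridding m n M q v h" and XY: "X \<noteq> Y"
    and X: "X \<in> {1..m} \<times> {1..n}" and Y: "Y \<in> {1..m} \<times> {1..n}"
    and cells: "(in_cell q v h X u \<and> in_cell q v h Y w) \<or> (in_cell q v h Y u \<and> in_cell q v h X w)"
    and arr: "orient_arrow m n c r q v h u w"
  shows "kappa q c r X Y u < kappa q c r X Y w"
proof -
  have vm: "\<forall>i<m. v i \<le> v (Suc i)" and hm: "\<forall>j<n. h j \<le> h (Suc j)"
    using g unfolding is_gridding_def by auto
  from arr show ?thesis
    unfolding orient_arrow_def
  proof (elim disjE bexE conjE)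
    fix i assume i: "i \<in> {1..m}" and ix: "in_col v i u" and iy: "in_col v i w"
      and o: "if c i = 1 then u < w else w < u"
    have fX: "fst X \<in> {1..m}" and fY: "fst Y \<in> {1..m}" using X Y by auto
    have hX: "in_col v (fst X) u \<or> in_col v (fst X) w" and hY: "in_col v (fst Y) u \<or> in_col v (fst Y) w"
      using cells unfolding in_cell_def by blast+
    have "fst X = i" using hX col_unique[OF vm fX i _ ix] col_unique[OF vm fX i _ iy] by blast
    moreover have "fst Y = i" using hY col_unique[OF vm fY i _ ix] col_unique[OF vm fY i _ iy] by blast
    ultimately have "fst X = i \<and> fst Y = i" by blast
    then show ?thesis using o unfolding kappa_def by (auto split: if_splits)
  next
    fix j assume j: "j \<in> {1..n}" and jx: "in_row q h j u" and jy: "in_row q h j w"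
      and o: "if r j = 1 then q!u < q!w else q!w < q!u"
    have fX: "snd X \<in> {1..n}" and fY: "snd Y \<in> {1..n}" using X Y by auto
    have hX: "in_row q h (snd X) u \<or> in_row q h (snd X) w" and hY: "in_row q h (snd Y) u \<or> in_row q h (snd Y) w"
      using cells unfolding in_cell_def by blast+
    have "snd X = j" using hX row_unique[OF hm fX j _ jx] row_unique[OF hm fX j _ jy] by blast
    moreover have "snd Y = j" using hY row_unique[OF hm fY j _ jx] row_unique[OF hm fY j _ jy] by blast
    ultimately have "snd X = j \<and> snd Y = j" by blast
    then have "fst X \<noteq> fst Y" using XY by (metis prod.collapse)
    then show ?thesis using o \<open>snd X = j \<and> snd Y = j\<close> unfolding kappa_def by (auto split: if_splits)
  qed
qed

lemma R1: "2 \<le> j \<Longrightarrow> 2 \<le> i \<Longrightarrow> (j-1) mod ell = (i-1) mod (ell::nat) \<Longrightarrow> (j-2) mod ell = (i-2) mod ell"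
proof -
  assume a: "2 \<le> j" "2 \<le> i" "(j-1) mod ell = (i-1) mod (ell::nat)"
  obtain j' i' where "j = Suc (Suc j')" "i = Suc (Suc i')" using a(1,2)
    by (metis add_2_eq_Suc le_Suc_ex)
  with a(3) show ?thesis by (simp add: mod_Suc split: if_splits)
qed

lemma R2: "ell \<le> a \<Longrightarrow> (a - ell) mod ell = a mod (ell::nat)"
  by (simp add: le_mod_geq)

lemma R3: "j < j' \<Longrightarrow> (j-1) mod ell = (j'-1) mod ell \<Longrightarrow> 1 \<le> j \<Longrightarrow> 0 < (ell::nat) \<Longrightarrow> j + ell \<le> j'"
proof -
  assume a: "j < j'" "(j-1) mod ell = (j'-1) mod ell" "1 \<le> j" "0 < ell"
  have "ell dvd (j'-1) - (j-1)" using mod_eq_dvd_iff_nat[of "j-1" "j'-1" ell] a(1,2) by simp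
  moreover have "(j'-1) - (j-1) > 0" using a by simp
  ultimately have "ell \<le> (j'-1) - (j-1)" by (simp add: dvd_imp_le)
  then show ?thesis using a by simp
qed

lemma R4: "2 \<le> (ell::nat) \<Longrightarrow> 2 \<le> i \<Longrightarrow> (i-2) mod ell \<noteq> (i-1) mod ell"
proof -
  assume a: "2 \<le> ell" "2 \<le> i"
  obtain i' where i: "i = Suc (Suc i')" using a(2) by (metis add_2_eq_Suc le_Suc_ex)
  have "Suc i' mod ell = (if Suc (i' mod ell) = ell then 0 else Suc (i' mod ell))" by (rule mod_Suc)
  then show ?thesis using i a(1) by (auto split: if_splits)
qed

lemma qlemma:
  fixes q :: "nat list" and v h ord :: "nat \<Rightarrow> nat" and lab :: "nat \<Rightarrow> nat \<times> nat" and m n :: nat and c r :: "nat \<Rightarrow> int"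
  defines "A \<equiv> orient_arrow m n c r q v h"
  assumes grid: "is_gridding m n M q v h"
    and ell2: "2 \<le> ell"
    and labinj: "inj_on lab {1..ell}"
    and labcells: "lab ` {1..ell} \<subseteq> {1..m} \<times> {1..n}"
    and cellC: "\<forall>j\<in>{1..N}. in_cell q v h (lab ((j-1) mod ell + 1)) (ord j)"
    and C2: "\<forall>j. 1 < j \<and> j \<le> N \<longrightarrow> A (ord (j-1)) (ord j)"
    and C3: "\<forall>j. ell+1 < j \<and> j \<le> N \<longrightarrow> A (ord j) (ord (j-ell-1))"
    and i2: "2 \<le> i" and iN: "i - 1 \<le> N"
    and k2: "2 \<le> k" and kN: "k \<le> N" and kres: "(k-1) mod ell = (i-1) mod ell"
    and a1: "A (ord (i-1)) (ord k)"
    and a2: "ell+2 \<le> i \<Longrightarrow> A (ord k) (ord (i-ell-1))"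
  shows "k = i"
proof -
  define X where "X = lab ((i-1) mod ell + 1)"
  define Y where "Y = lab ((i-2) mod ell + 1)"
  define K where "K = kappa q c r X Y"
  have ell0: "0 < ell" using ell2 by simp
  have rng: "a mod ell + 1 \<in> {1..ell}" for a using mod_less_divisor[OF ell0, of a] by simp
  have X: "X \<in> {1..m} \<times> {1..n}" unfolding X_def using labcells rng by blast
  have Y: "Y \<in> {1..m} \<times> {1..n}" unfolding Y_def using labcells rng by blast
  have XY: "X \<noteq> Y"
  proof
    assume "X = Y"
    then have "(i-1) mod ell + 1 = (i-2) mod ell + 1"
      using labinj rng unfolding X_def Y_def inj_on_def by blast
    then show False using R4[OF ell2 i2] by simp
  qed
  have inX: "in_cell q v h X (ord j)" if "1 \<le> j" "j \<le> N" "(j-1) mod ell = (i-1) mod ell" for j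
  proof -
    have "in_cell q v h (lab ((j-1) mod ell + 1)) (ord j)" using cellC that(1,2) by simp
    then show ?thesis unfolding X_def using that(3) by simp
  qed
  have inY: "in_cell q v h Y (ord j)" if "1 \<le> j" "j \<le> N" "(j-1) mod ell = (i-2) mod ell" for j
  proof -
    have "in_cell q v h (lab ((j-1) mod ell + 1)) (ord j)" using cellC that(1,2) by simp
    then show ?thesis unfolding Y_def using that(3) by simp
  qed
  have crXY: "K u < K w" if "in_cell q v h X u" "in_cell q v h Y w" "A u w" for u w
    using cross[OF grid XY X Y] that unfolding K_def A_def by blast
  have crYX: "K u < K w" if "in_cell q v h Y u" "in_cell q v h X w" "A u w" for u w
    using cross[OF grid XY X Y] that unfolding K_def A_def by blast
  have prevY: "(j-2) mod ell = (i-2) mod ell" if "2 \<le> j" "(j-1) mod ell = (i-1) mod ell" for j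
    using R1[OF that(1) i2 that(2)] .
  have step: "K (ord j) < K (ord (j-ell))"
    if j: "ell+2 \<le> j" "j \<le> N" "(j-1) mod ell = (i-1) mod ell" for j
  proof -
    have a: "A (ord j) (ord (j-ell-1))" using spec[OF C3, of j] j by simp
    have m1: "(j - ell - 1 - 1) mod ell = (i-2) mod ell"
      using R2[of ell "j-2"] prevY[of j] j by (simp add: diff_diff_left add.commute)
    have "in_cell q v h Y (ord (j-ell-1))" using inY[of "j-ell-1"] m1 j by simp
    then have s1: "K (ord j) < K (ord (j-ell-1))" using crXY[OF inX[of j] _ a] j by simp
    have h1: "1 < j - ell \<and> j - ell \<le> N" using j by arith
    have b: "A (ord (j-ell-1)) (ord (j-ell))" using spec[OF C2, of "j-ell"] h1 by simp
    have m2: "(j - ell - 1) mod ell = (i-1) mod ell"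
      using R2[of ell "j-1"] j by (simp add: diff_diff_left add.commute)
    have "K (ord (j-ell-1)) < K (ord (j-ell))"
      using crYX[OF \<open>in_cell q v h Y (ord (j-ell-1))\<close> inX[of "j-ell"] b] m2 j by simp
    then show ?thesis using s1 by simp
  qed
  have chain: "\<And>j'. j < j' \<Longrightarrow> j' \<le> N \<Longrightarrow> (j'-1) mod ell = (i-1) mod ell \<Longrightarrow> K (ord j') < K (ord j)"
    if j: "2 \<le> j" "(j-1) mod ell = (i-1) mod ell" for j
  proof -
    fix j' show "j < j' \<Longrightarrow> j' \<le> N \<Longrightarrow> (j'-1) mod ell = (i-1) mod ell \<Longrightarrow> K (ord j') < K (ord j)"
    proof (induction j' rule: less_induct)
      case (less j')
      have ge: "j + ell \<le> j'" using R3[of j j' ell] less.prems j ell0 by simp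
      have s: "K (ord j') < K (ord (j'-ell))" using step[of j'] ge j less.prems by simp
      have m: "(j' - ell - 1) mod ell = (i-1) mod ell"
        using R2[of ell "j'-1"] ge j less.prems by (simp add: diff_diff_left add.commute)
      show ?case
      proof (cases "j' - ell = j")
        case True then show ?thesis using s by simp
      next
        case False
        then have "K (ord (j'-ell)) < K (ord j)" using less.IH[of "j'-ell"] ge less.prems m ell0 by simp
        then show ?thesis using s by simp
      qed
    qed
  qed
  have iX: "(i-2) mod ell = (i-2) mod ell" by simp
  have Yi: "in_cell q v h Y (ord (i-1))" using inY[of "i-1"] i2 iN by (simp add: numeral_2_eq_2)
  have Xk: "in_cell q v h X (ord k)" using inX[of k] k2 kN kres by simp
  have base: "K (ord (i-1)) < K (ord k)" using crYX[OF Yi Xk a1] .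
  show "k = i"
  proof (rule ccontr)
    assume "k \<noteq> i"
    then consider "i < k" | "k < i" by linarith
    then show False
    proof cases
      case 1
      have ge: "i + ell \<le> k" using R3[of i k ell] 1 kres i2 ell0 by simp
      have m: "(i + ell - 1) mod ell = (i-1) mod ell"
        using R2[of ell "i+ell-1"] i2 by simp
      have Xie: "in_cell q v h X (ord (i+ell))" using inX[of "i+ell"] ge kN m i2 by simp
      have a: "A (ord (i+ell)) (ord (i-1))" using spec[OF C3, of "i+ell"] ge kN i2 by simp
      have t1: "K (ord (i+ell)) < K (ord (i-1))" using crXY[OF Xie Yi a] .
      have t2: "K (ord k) \<le> K (ord (i+ell))"
      proof (cases "k = i + ell")
        case True then show ?thesis by simp
      next
        case False
        then have "i + ell < k" using ge by arith
        then show ?thesis using chain[of "i+ell" k] i2 m kN kres by simp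
      qed
      show False using t1 t2 base by simp
    next
      case 2
      have ge: "k + ell \<le> i" using R3[of k i ell] 2 kres k2 ell0 by simp
      have a: "A (ord k) (ord (i-ell-1))" using a2 ge k2 by simp
      have m1: "(i - ell - 1 - 1) mod ell = (i-2) mod ell"
        using R2[of ell "i-2"] ge k2 by (simp add: diff_diff_left add.commute)
      have Yi2: "in_cell q v h Y (ord (i-ell-1))" using inY[of "i-ell-1"] m1 ge k2 iN by simp
      have t1: "K (ord k) < K (ord (i-ell-1))" using crXY[OF Xk Yi2 a] .
      have m2: "(i - ell - 1) mod ell = (i-1) mod ell"
        using R2[of ell "i-1"] ge k2 by (simp add: diff_diff_left add.commute)
      have h1: "1 < i - ell \<and> i - ell \<le> N" using ge k2 iN ell0 by arith
      have b: "A (ord (i-ell-1)) (ord (i-ell))" using spec[OF C2, of "i-ell"] h1 by simp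
      have Xi: "in_cell q v h X (ord (i-ell))" using inX[of "i-ell"] m2 h1 by simp
      have t2: "K (ord (i-ell-1)) < K (ord (i-ell))" using crYX[OF Yi2 Xi b] .
      have t3: "K (ord (i-ell)) \<le> K (ord k)"
      proof (cases "k = i - ell")
        case True then show ?thesis by simp
      next
        case False
        then have "k < i - ell" using ge by arith
        then show ?thesis using chain[of k "i-ell"] k2 m2 h1 kres by simp
      qed
      show False using t1 t2 t3 by simp
    qed
  qed
qed

definition coil_data ::
  "nat \<Rightarrow> nat \<Rightarrow> (nat \<Rightarrow> nat \<Rightarrow> int) \<Rightarrow> (nat \<Rightarrow> int) \<Rightarrow> (nat \<Rightarrow> int) \<Rightarrow> nat \<Rightarrow>
   nat list \<Rightarrow> (nat \<Rightarrow> nat) \<Rightarrow> (nat \<Rightarrow> nat) \<Rightarrow> (nat \<Rightarrow> nat) \<Rightarrow> (nat \<Rightarrow> nat \<times> nat) \<Rightarrow> bool" where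
  "coil_data m n M c r ell p v h ord lab \<longleftrightarrow>
     is_gridding m n M p v h \<and> ell < length p \<and>
     bij_betw ord {1..length p} {0..<length p} \<and>
     bij_betw lab {1..ell} (nonzero_cells m n M) \<and>
     (\<forall>i\<in>{1..length p}. in_cell p v h (lab (((i - 1) mod ell) + 1)) (ord i)) \<and>
     (\<forall>i. 1 < i \<and> i \<le> length p \<longrightarrow> orient_arrow m n c r p v h (ord (i - 1)) (ord i)) \<and>
     (\<forall>i. ell + 1 < i \<and> i \<le> length p \<longrightarrow> orient_arrow m n c r p v h (ord i) (ord (i - ell - 1)))"

lemma coil_data_of:
  assumes "is_gridded_coil m n M c r p v h"
  shows "\<exists>ord lab. coil_data m n M c r (card (nonzero_cells m n M)) p v h ord lab"
  using assms unfolding is_gridded_coil_def coil_data_def Let_def by blast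

definition enc :: "nat \<Rightarrow> nat \<times> nat \<Rightarrow> nat \<Rightarrow> nat" where
  "enc a b f = prod_encode (a, prod_encode (prod_encode b, f))"

lemma enc_eq: "enc a b f = enc a' b' f' \<longleftrightarrow> a = a' \<and> b = b' \<and> f = f'"
  unfolding enc_def by auto

definition flag :: "nat \<Rightarrow> nat \<Rightarrow> nat" where
  "flag L j = (if j = 1 then 1 else if j = L then 2 else 0)"

definition lcode :: "nat \<Rightarrow> nat list \<Rightarrow> (nat \<Rightarrow> nat) \<Rightarrow> (nat \<Rightarrow> nat \<times> nat) \<Rightarrow> nat \<Rightarrow> nat" where
  "lcode ell p ord lab x =
     enc ((inv_into {1..length p} ord x - 1) mod ell)
         (lab ((inv_into {1..length p} ord x - 1) mod ell + 1))
         (flag (length p) (inv_into {1..length p} ord x))"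

lemma flag1: "flag N k = 1 \<Longrightarrow> k = 1"
  by (cases "k = 1"; cases "k = N") (simp_all add: flag_def)

lemma flag2: "flag N k = 2 \<Longrightarrow> k = N"
  by (cases "k = 1"; cases "k = N") (simp_all add: flag_def)

lemma core:
  assumes P: "coil_data m n M c r ell p v h ordP labP"
    and Q: "coil_data m n M c r ell q v' h' ordQ labQ"
    and ell2: "2 \<le> ell"
    and e: "embedding p q e"
    and codes: "\<forall>x<length p. lcode ell p ordP labP x = lcode ell q ordQ labQ (e x)"
  shows "length p = length q"
proof -
  define L where "L = length p"
  define N where "N = length q"
  have cellsub: "nonzero_cells m n M \<subseteq> {1..m} \<times> {1..n}" unfolding nonzero_cells_def by auto
  have gP: "is_gridding m n M p v h" and gQ: "is_gridding m n M q v' h'"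
    using P Q unfolding coil_data_def by auto
  have bP: "bij_betw ordP {1..L} {0..<L}" and bQ: "bij_betw ordQ {1..N} {0..<N}"
    using P Q unfolding coil_data_def L_def N_def by auto
  have lP: "bij_betw labP {1..ell} (nonzero_cells m n M)" and lQ: "bij_betw labQ {1..ell} (nonzero_cells m n M)"
    using P Q unfolding coil_data_def by auto
  have cP: "\<forall>i\<in>{1..L}. in_cell p v h (labP (((i - 1) mod ell) + 1)) (ordP i)"
    and cQ: "\<forall>i\<in>{1..N}. in_cell q v' h' (labQ (((i - 1) mod ell) + 1)) (ordQ i)"
    using P Q unfolding coil_data_def L_def N_def by auto
  have C2P: "\<forall>i. 1 < i \<and> i \<le> L \<longrightarrow> orient_arrow m n c r p v h (ordP (i - 1)) (ordP i)"
    and C3P: "\<forall>i. ell + 1 < i \<and> i \<le> L \<longrightarrow> orient_arrow m n c r p v h (ordP i) (ordP (i - ell - 1))"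
    using P unfolding coil_data_def L_def by auto
  have C2Q: "\<forall>i. 1 < i \<and> i \<le> N \<longrightarrow> orient_arrow m n c r q v' h' (ordQ (i - 1)) (ordQ i)"
    and C3Q: "\<forall>i. ell + 1 < i \<and> i \<le> N \<longrightarrow> orient_arrow m n c r q v' h' (ordQ i) (ordQ (i - ell - 1))"
    using Q unfolding coil_data_def N_def by auto
  have ellL: "ell < L" using P unfolding coil_data_def L_def by auto
  have ell0: "0 < ell" using ell2 by simp
  have rng: "a mod ell + 1 \<in> {1..ell}" for a using mod_less_divisor[OF ell0, of a] by simp
  have labPc: "labP (a mod ell + 1) \<in> {1..m} \<times> {1..n}" for a
    using lP rng cellsub unfolding bij_betw_def by blast
  have em: "\<And>i j. i < j \<Longrightarrow> j < L \<Longrightarrow> e i < e j"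
    and eN: "\<And>i. i < L \<Longrightarrow> e i < N"
    using e unfolding embedding_def L_def N_def by auto
  have einj: "e x = e y \<Longrightarrow> x < L \<Longrightarrow> y < L \<Longrightarrow> x = y" for x y
    using em[of x y] em[of y x] by (cases x y rule: linorder_cases) auto
  have ordL: "ordP i < L" if "i \<in> {1..L}" for i using bP that unfolding bij_betw_def by auto
  define iP where "iP = inv_into {1..L} ordP"
  define iQ where "iQ = inv_into {1..N} ordQ"
  have iPo: "iP (ordP j) = j" if "j \<in> {1..L}" for j
    unfolding iP_def using bP that by (simp add: bij_betw_imp_inj_on inv_into_f_f)
  have oiP: "ordP (iP x) = x" "iP x \<in> {1..L}" if "x < L" for x
  proof -
    have "x \<in> ordP ` {1..L}" using bP that unfolding bij_betw_def by simp
    then show "ordP (iP x) = x" "iP x \<in> {1..L}" unfolding iP_def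
      by (simp add: f_inv_into_f, rule inv_into_into)
  qed
  have iQo: "iQ (ordQ j) = j" if "j \<in> {1..N}" for j
    unfolding iQ_def using bQ that by (simp add: bij_betw_imp_inj_on inv_into_f_f)
  have oiQ: "ordQ (iQ x) = x" "iQ x \<in> {1..N}" if "x < N" for x
  proof -
    have "x \<in> ordQ ` {1..N}" using bQ that unfolding bij_betw_def by simp
    then show "ordQ (iQ x) = x" "iQ x \<in> {1..N}" unfolding iQ_def
      by (simp add: f_inv_into_f, rule inv_into_into)
  qed
  have codeP: "lcode ell p ordP labP x = enc ((iP x - 1) mod ell) (labP ((iP x - 1) mod ell + 1)) (flag L (iP x))" for x
    unfolding lcode_def iP_def L_def by simp
  have codeQ: "lcode ell q ordQ labQ y = enc ((iQ y - 1) mod ell) (labQ ((iQ y - 1) mod ell + 1)) (flag N (iQ y))" for y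
    unfolding lcode_def iQ_def N_def by simp
  have dec: "(iQ (e x) - 1) mod ell = (iP x - 1) mod ell \<and>
             labQ ((iQ (e x) - 1) mod ell + 1) = labP ((iP x - 1) mod ell + 1) \<and>
             flag N (iQ (e x)) = flag L (iP x)" if "x < L" for x
  proof -
    have "lcode ell p ordP labP x = lcode ell q ordQ labQ (e x)" using codes that unfolding L_def by simp
    then have "enc ((iP x - 1) mod ell) (labP ((iP x - 1) mod ell + 1)) (flag L (iP x)) =
       enc ((iQ (e x) - 1) mod ell) (labQ ((iQ (e x) - 1) mod ell + 1)) (flag N (iQ (e x)))"
      by (simp only: codeP codeQ)
    then have "(iP x - 1) mod ell = (iQ (e x) - 1) mod ell \<and>
      labP ((iP x - 1) mod ell + 1) = labQ ((iQ (e x) - 1) mod ell + 1) \<and>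
      flag L (iP x) = flag N (iQ (e x))" unfolding enc_eq .
    then show ?thesis by (elim conjE) (intro conjI; rule sym)
  qed
  have cellx: "in_cell p v h (labP ((iP x - 1) mod ell + 1)) x" if "x < L" for x
  proof -
    have "in_cell p v h (labP ((iP x - 1) mod ell + 1)) (ordP (iP x))" using cP oiP(2)[OF that] by blast
    then show ?thesis by (simp only: oiP(1)[OF that])
  qed
  have cellex: "in_cell q v' h' (labP ((iP x - 1) mod ell + 1)) (e x)" if "x < L" for x
  proof -
    have "in_cell q v' h' (labQ ((iQ (e x) - 1) mod ell + 1)) (ordQ (iQ (e x)))"
      using cQ oiQ(2)[OF eN[OF that]] by blast
    moreover have d: "labQ ((iQ (e x) - 1) mod ell + 1) = labP ((iP x - 1) mod ell + 1)"
      using dec[OF that] by blast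
    ultimately have "in_cell q v' h' (labP ((iP x - 1) mod ell + 1)) (ordQ (iQ (e x)))" by (simp only: d)
    then show ?thesis by (simp only: oiQ(1)[OF eN[OF that]])
  qed
  have tr: "orient_arrow m n c r q v' h' (e x) (e y)"
    if "x < L" "y < L" "orient_arrow m n c r p v h x y" for x y
    using transfer_arrow[OF gP gQ e _ _ labPc[of "iP x - 1"] labPc[of "iP y - 1"]
       cellx[OF that(1)] cellex[OF that(1)] cellx[OF that(2)] cellex[OF that(2)] that(3)] that(1,2)
    unfolding L_def by simp
  have main: "j \<le> N \<and> e (ordP j) = ordQ j" if "1 \<le> j" "j \<le> L" for j
    using that
  proof (induction j rule: less_induct)
    case (less j)
    have jL: "j \<in> {1..L}" using less.prems by simp
    have xL: "ordP j < L" using ordL jL by blast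
    define k where "k = iQ (e (ordP j))"
    have kN: "k \<in> {1..N}" and ok: "ordQ k = e (ordP j)"
      using oiQ[OF eN[OF xL]] unfolding k_def by auto
    have dj1: "(k - 1) mod ell = (j - 1) mod ell"
      using conjunct1[OF dec[OF xL]] iPo[OF jL] unfolding k_def by simp
    have dj2: "flag N k = flag L j"
      using conjunct2[OF conjunct2[OF dec[OF xL]]] iPo[OF jL] unfolding k_def by simp
    note dj = dj1 dj2
    show ?case
    proof (cases "j = 1")
      case True
      then have "flag L j = 1" unfolding flag_def by simp
      then have "k = 1" using dj(2) flag1[of N k] by simp
      then show ?thesis using True ok kN by simp
    next
      case False
      then have j2: "2 \<le> j" using less.prems by simp
      have IH1: "j - 1 \<le> N \<and> e (ordP (j-1)) = ordQ (j-1)" using less.IH[of "j-1"] j2 less.prems by simp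
      have IHone: "e (ordP 1) = ordQ 1" using less.IH[of 1] j2 less.prems by simp
      have x1: "ordP 1 < L" using ordL ellL by simp
      have k2: "2 \<le> k"
      proof (rule ccontr)
        assume "\<not> 2 \<le> k"
        then have "k = 1" using kN by simp
        then have "e (ordP j) = e (ordP 1)" using ok IHone by simp
        then have "ordP j = ordP 1" using einj xL x1 by blast
        moreover have "iP (ordP 1) = 1" using iPo[of 1] ellL by simp
        ultimately have "j = 1" using iPo[OF jL] by simp
        then show False using False by simp
      qed
      have "j - 1 \<in> {1..L}" using jL j2 by auto
      then have xj1: "ordP (j-1) < L" using ordL by blast
      have a1P: "orient_arrow m n c r p v h (ordP (j-1)) (ordP j)" using spec[OF C2P, of j] j2 jL by simp
      have a1: "orient_arrow m n c r q v' h' (ordQ (j-1)) (ordQ k)"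
      proof -
        have "orient_arrow m n c r q v' h' (e (ordP (j-1))) (e (ordP j))" using tr[OF xj1 xL a1P] .
        then show ?thesis by (simp only: conjunct2[OF IH1] ok[symmetric])
      qed
      have a2: "orient_arrow m n c r q v' h' (ordQ k) (ordQ (j-ell-1))" if "ell+2 \<le> j"
      proof -
        have h: "ell + 1 < j \<and> j \<le> L" using that jL by simp
        have a2P: "orient_arrow m n c r p v h (ordP j) (ordP (j-ell-1))" using spec[OF C3P, of j] h by blast
        have r1: "1 \<le> j - ell - 1" "j - ell - 1 < j" "j - ell - 1 \<le> L" using that jL by auto
        have IH2: "e (ordP (j-ell-1)) = ordQ (j-ell-1)" using less.IH[OF r1(2) r1(1) r1(3)] by simp
        have "j - ell - 1 \<in> {1..L}" using r1 by auto
        then have xj2: "ordP (j-ell-1) < L" using ordL by blast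
        have "orient_arrow m n c r q v' h' (e (ordP j)) (e (ordP (j-ell-1)))" using tr[OF xL xj2 a2P] .
        then show ?thesis by (simp only: IH2 ok[symmetric])
      qed
      have lsub: "labQ ` {1..ell} \<subseteq> {1..m} \<times> {1..n}" using lQ cellsub unfolding bij_betw_def by simp
      have kN': "k \<le> N" using kN by simp
      have kj: "k = j"
        using qlemma[OF gQ ell2 bij_betw_imp_inj_on[OF lQ] lsub cQ C2Q C3Q j2 conjunct1[OF IH1] k2 kN' dj(1) a1 a2] .
      show ?thesis using kj kN ok by simp
    qed
  qed
  have Lpos: "1 \<le> L" using ellL by simp
  have fin: "L \<le> N \<and> e (ordP L) = ordQ L" using main[OF Lpos] by simp
  have xL: "ordP L < L" using ordL Lpos by simp
  have LN: "L \<in> {1..N}" using fin Lpos by simp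
  have iPL: "iP (ordP L) = L" using iPo[of L] Lpos by simp
  have iQL: "iQ (e (ordP L)) = L" using fin iQo[OF LN] by simp
  have "flag N L = flag L L"
    using conjunct2[OF conjunct2[OF dec[OF xL]]] iPL iQL by simp
  moreover have "L \<noteq> 1" using ellL ell2 by simp
  ultimately have "flag N L = 2" unfolding flag_def by simp
  then have "L = N" by (rule flag2)
  then show ?thesis unfolding L_def N_def .
qed

lemma ell_ge2:
  assumes "rc_graph_is_cycle m n M"
  shows "2 \<le> card (nonzero_cells m n M)"
proof -
  obtain w and k :: nat where k3: "3 \<le> k" and bij: "bij_betw w {0..<k} (rc_vertices m n)"
    and E: "\<forall>x y. rc_edge m n M x y \<longleftrightarrow> (\<exists>i<k. (x = w i \<and> y = w ((i+1) mod k)) \<or> (y = w i \<and> x = w ((i+1) mod k)))"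
    using assms unfolding rc_graph_is_cycle_def is_cycle_graph_def by blast
  have m1: "(0+1) mod k = 1" and m2: "(1+1) mod k = 2" using k3 by auto
  have e01: "rc_edge m n M (w 0) (w 1)"
  proof -
    have "\<exists>i<k. (w 0 = w i \<and> w 1 = w ((i+1) mod k)) \<or> (w 1 = w i \<and> w 0 = w ((i+1) mod k))"
      using m1 k3 by (intro exI[of _ 0]) simp
    then show ?thesis by (simp only: E)
  qed
  have e12: "rc_edge m n M (w 1) (w 2)"
  proof -
    have "\<exists>i<k. (w 1 = w i \<and> w 2 = w ((i+1) mod k)) \<or> (w 2 = w i \<and> w 1 = w ((i+1) mod k))"
      using m2 k3 by (intro exI[of _ 1]) (simp add: numeral_2_eq_2)
    then show ?thesis by (simp only: E)
  qed
  have w02: "w 0 \<noteq> w 2"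
  proof
    assume "w 0 = w 2"
    moreover have "inj_on w {0..<k}" using bij bij_betw_imp_inj_on by blast
    ultimately have "(0::nat) = 2" using k3 by (intro inj_onD[of w "{0..<k}"]) auto
    then show False by simp
  qed
  obtain a b where ab: "(a, b) \<in> nonzero_cells m n M"
    and w01: "(w 0 = Inl a \<and> w 1 = Inr b) \<or> (w 0 = Inr b \<and> w 1 = Inl a)"
    using e01 unfolding rc_edge_def nonzero_cells_def by blast
  obtain a' b' where ab': "(a', b') \<in> nonzero_cells m n M"
    and w12: "(w 1 = Inl a' \<and> w 2 = Inr b') \<or> (w 1 = Inr b' \<and> w 2 = Inl a')"
    using e12 unfolding rc_edge_def nonzero_cells_def by blast
  have ne: "(a, b) \<noteq> (a', b')"
  proof
    assume "(a, b) = (a', b')"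
    then have "a = a'" "b = b'" by auto
    then show False using w01 w12 w02 by auto
  qed
  have fin: "finite (nonzero_cells m n M)"
    by (rule finite_subset[of _ "{1..m} \<times> {1..n}"]) (auto simp: nonzero_cells_def)
  have "card {(a, b), (a', b')} = 2" using ne by simp
  moreover have "card {(a, b), (a', b')} \<le> card (nonzero_cells m n M)"
    using ab ab' fin by (intro card_mono) auto
  ultimately show ?thesis by simp
qed

lemma lcode_in:
  assumes "lab ` {1..ell} \<subseteq> {1..m} \<times> {1..n}" "0 < ell"
  shows "lcode ell p ord lab x \<in> (\<lambda>(a, b, f). enc a b f) ` ({0..<ell} \<times> ({1..m} \<times> {1..n}) \<times> {0..2})"
proof -
  define j where "j = inv_into {1..length p} ord x"
  define rs where "rs = (j - 1) mod ell"
  have rs: "rs < ell" unfolding rs_def using assms(2) by simp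
  have "rs + 1 \<in> {1..ell}" using rs by simp
  then have lb: "lab (rs + 1) \<in> {1..m} \<times> {1..n}" using assms(1) by blast
  have fl: "flag (length p) j \<le> 2" unfolding flag_def by simp
  have "lcode ell p ord lab x = (\<lambda>(a, b, f). enc a b f) (rs, lab (rs + 1), flag (length p) j)"
    unfolding lcode_def j_def rs_def by simp
  moreover have "(rs, lab (rs + 1), flag (length p) j) \<in> {0..<ell} \<times> ({1..m} \<times> {1..n}) \<times> {0..2}"
    using rs lb fl by simp
  ultimately show ?thesis by (rule image_eqI)
qed

lemma good_fin:
  fixes g :: "nat \<Rightarrow> 'b"
  assumes "finite (range g)"
  shows "good_on UNIV (\<lambda>x y. g x = g y)"
  unfolding good_on_def
proof (intro allI impI)
  fix F :: "nat \<Rightarrow> nat"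
  show "\<exists>i j. i < j \<and> g (F i) = g (F j)"
  proof (rule ccontr)
    assume "\<not> ?thesis"
    then have "inj (g \<circ> F)" unfolding inj_on_def
      by (metis comp_apply linorder_neqE_nat)
    moreover have "finite (range (g \<circ> F))"
      using assms by (rule finite_subset[rotated]) auto
    ultimately have "finite (UNIV :: nat set)" using finite_imageD by blast
    then show False by simp
  qed
qed

theorem proposition4p12:
  fixes C :: "nat list set" and m n :: nat and M :: "nat \<Rightarrow> nat \<Rightarrow> int"
    and c r :: "nat \<Rightarrow> int"
  assumes "perm_class C"
    and "partial_mult_matrix m n M c r"
    and "rc_graph_is_cycle m n M"
    and "\<forall>N. \<exists>p\<in>C. is_coil m n M c r p \<and> N \<le> length p"
  shows "\<not> labelled_wqo C"
proof
  assume lw: "labelled_wqo C"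
  define ell where "ell = card (nonzero_cells m n M)"
  have ell2: "2 \<le> ell" unfolding ell_def using ell_ge2[OF assms(3)] .
  have "\<forall>N. \<exists>p. p \<in> C \<and> is_coil m n M c r p \<and> N \<le> length p" using assms(4) by blast
  from choice[OF this] obtain f where f: "\<forall>N. f N \<in> C \<and> is_coil m n M c r (f N) \<and> N \<le> length (f N)"
    by blast
  define s where "s = rec_nat (f 0) (\<lambda>_ p. f (Suc (length p)))"
  have s0: "s 0 = f 0" and sS: "s (Suc k) = f (Suc (length (s k)))" for k unfolding s_def by simp_all
  have sC: "s k \<in> C \<and> is_coil m n M c r (s k)" for k
    using f s0 sS by (cases k) auto
  have slen: "length (s k) < length (s (Suc k))" for k
    using f sS[of k] by (metis Suc_le_lessD)
  have smono: "length (s i) < length (s j)" if "i < j" for i j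
    using lift_Suc_mono_less[of "\<lambda>k. length (s k)", OF slen that] .
  have "\<forall>k. \<exists>d. coil_data m n M c r ell (s k) (fst d) (fst (snd d)) (fst (snd (snd d))) (snd (snd (snd d)))"
  proof
    fix k
    obtain v h where "is_gridded_coil m n M c r (s k) v h" using sC[of k] unfolding is_coil_def by blast
    then obtain ord lab where "coil_data m n M c r ell (s k) v h ord lab"
      using coil_data_of unfolding ell_def by blast
    then show "\<exists>d. coil_data m n M c r ell (s k) (fst d) (fst (snd d)) (fst (snd (snd d))) (snd (snd (snd d)))"
      by (intro exI[of _ "(v, h, ord, lab)"]) simp
  qed
  from choice[OF this] obtain D where D: "\<And>k. coil_data m n M c r ell (s k) (fst (D k)) (fst (snd (D k))) (fst (snd (snd (D k)))) (snd (snd (snd (D k))))"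
    by blast
  define Od where "Od k = fst (snd (snd (D k)))" for k
  define Lb where "Lb k = snd (snd (snd (D k)))" for k
  define a where "a k = lcode ell (s k) (Od k) (Lb k)" for k
  define S where "S = (\<lambda>(a, b, f). enc a b f) ` ({0..<ell} \<times> ({1..m} \<times> {1..n}) \<times> {0..(2::nat)})"
  define g where "g x = (if x \<in> S then Some x else None)" for x
  define le where "le x y = (g x = g y)" for x y
  have finS: "finite S" unfolding S_def by simp
  have "range g \<subseteq> insert None (Some ` S)" unfolding g_def by auto
  then have fing: "finite (range g)" using finS by (meson finite_imageI finite_insert finite_subset)
  have wq: "wqo_nat le"
    unfolding wqo_nat_def quasi_order_on_nat_def
  proof (intro conjI allI impI)
    show "good_on UNIV le" unfolding le_def[abs_def] using good_fin[OF fing] .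
  qed (auto simp: le_def)
  have labsub: "Lb k ` {1..ell} \<subseteq> {1..m} \<times> {1..n}" for k
    using D[of k] unfolding coil_data_def bij_betw_def Lb_def nonzero_cells_def by auto
  have aS: "a k x \<in> S" for k x
    unfolding a_def S_def using lcode_in[OF labsub] ell2 by simp
  have good: "good_on (labelled_elems C) (labelled_le le)" using lw wq unfolding labelled_wqo_def by blast
  define F where "F k = (s k, a k)" for k
  have FC: "F k \<in> labelled_elems C" for k unfolding F_def labelled_elems_def using sC by simp
  obtain i j where ij: "i < j" and le_ij: "labelled_le le (F i) (F j)"
    using good FC unfolding good_on_def by blast
  then obtain e where e: "embedding (s i) (s j) e" and lab: "\<forall>x<length (s i). le (a i x) (a j (e x))"
    unfolding labelled_le_def F_def by auto
  have codes: "\<forall>x<length (s i). lcode ell (s i) (Od i) (Lb i) x = lcode ell (s j) (Od j) (Lb j) (e x)"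
  proof (intro allI impI)
    fix x assume "x < length (s i)"
    then have "g (a i x) = g (a j (e x))" using lab unfolding le_def by blast
    then have "a i x = a j (e x)" using aS[of i x] aS[of j "e x"] unfolding g_def by simp
    then show "lcode ell (s i) (Od i) (Lb i) x = lcode ell (s j) (Od j) (Lb j) (e x)" unfolding a_def .
  qed
  have "length (s i) = length (s j)"
    using core[OF D[of i] D[of j] ell2 e] codes unfolding Od_def Lb_def by blast
  then show False using smono[OF ij] by simp
qed

end
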